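(* Let $R$ be an associative ring with identity and $a,b,c,d\in R$ such that both $a^{\|(b,c)}$ and $d^{\|(b,c)}$ exist. Then the following are equivalent: (i) $a^{\|(b,c)}a=dd^{\|(b,c)}$; (ii) $a^{\|(b,c)}dd^{\|(b,c)}a=dd^{\|(b,c)}aa^{\|(b,c)}$; (iii) $d^{\|(b,c)}da^{\|(b,c)}a=da^{\|(b,c)}ad^{\|(b,c)}$; (iv) $a^{\|(b,c)}=dd^{\|(b,c)}a^{\|(b,c)}$ and $d^{\|(b,c)}=d^{\|(b,c)}a^{\|(b,c)}a$; (v) $a^{\|(b,c)}ad^{\|(b,c)}=d^{\|(b,c)}a^{\|(b,c)}a$ and $a^{\|(b,c)}dd^{\|(b,c)}=dd^{\|(b,c)}a^{\|(b,c)}$. Moreover, if any of these holds, then $ad$ has a $(b,c)$-inverse and $(ad)^{\|(b,c)}=d^{\|(b,c)}a^{\|(b,c)}$.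
   Context: For $a,b,c\in R$, $a$ is $(b,c)$-invertible if there exists $y\in R$ with $y\in (bRy)\cap(yRc)$, $yab=b$ and $cay=c$; such $y$ is unique and denoted $a^{\|(b,c)}$. *)

theory Defs
  imports Main
begin

definition is_bc_inverse :: "'a::ring_1 \<Rightarrow> 'a \<Rightarrow> 'a \<Rightarrow> 'a \<Rightarrow> bool" where
  "is_bc_inverse a b c y \<longleftrightarrow>
     (\<exists>r. y = b * r * y) \<and> (\<exists>s. y = y * s * c) \<and> y * a * b = b \<and> c * a * y = c"

definition bc_invertible :: "'a::ring_1 \<Rightarrow> 'a \<Rightarrow> 'a \<Rightarrow> bool" where
  "bc_invertible a b c \<longleftrightarrow> (\<exists>y. is_bc_inverse a b c y)"

definition bc_inv :: "'a::ring_1 \<Rightarrow> 'a \<Rightarrow> 'a \<Rightarrow> 'a" where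
  "bc_inv a b c = (THE y. is_bc_inverse a b c y)"

end

theory Submission
  imports Defs
begin

lemma bcL: "is_bc_inverse a b c y \<Longrightarrow> y*a*(b*t) = b*t"
  unfolding is_bc_inverse_def by (metis mult.assoc)

lemma bcR: "is_bc_inverse a b c y \<Longrightarrow> (t*c)*a*y = t*c"
  unfolding is_bc_inverse_def by (metis mult.assoc)

lemma bc_uniq: "is_bc_inverse a b c y \<Longrightarrow> is_bc_inverse a b c z \<Longrightarrow> y = z"
proof -
  assume y: "is_bc_inverse a b c y" and z: "is_bc_inverse a b c z"
  then obtain r s where r: "y = b*r*y" and s: "z = z*s*c" unfolding is_bc_inverse_def by blast
  have "z*a*y = y" using bcL[OF z, of "r*y"] r by (simp add: mult.assoc)
  moreover have "z*a*y = z" using bcR[OF y, of "z*s"] s by (metis mult.assoc)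
  ultimately show "y = z" by simp
qed

lemma bc_spec: "bc_invertible a b c \<Longrightarrow> is_bc_inverse a b c (bc_inv a b c)"
  unfolding bc_invertible_def bc_inv_def by (metis bc_uniq theI)

theorem theorem4p5:
  fixes a b c d :: "'a::ring_1"
  assumes "bc_invertible a b c" and "bc_invertible d b c"
  shows "let ai = bc_inv a b c; di = bc_inv d b c;
             P1 = (ai * a = d * di);
             P2 = (ai * d * di * a = d * di * a * ai);
             P3 = (di * d * ai * a = d * ai * a * di);
             P4 = (ai = d * di * ai \<and> di = di * ai * a);
             P5 = (ai * a * di = di * ai * a \<and> ai * d * di = d * di * ai)
         in (P1 \<longleftrightarrow> P2) \<and> (P1 \<longleftrightarrow> P3) \<and> (P1 \<longleftrightarrow> P4) \<and> (P1 \<longleftrightarrow> P5) \<and>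
            (P1 \<longrightarrow> bc_invertible (a * d) b c \<and> bc_inv (a * d) b c = di * ai)"
proof -
  define ai where "ai = bc_inv a b c"
  define di where "di = bc_inv d b c"
  have A: "is_bc_inverse a b c ai" using bc_spec[OF assms(1)] ai_def by simp
  have D: "is_bc_inverse d b c di" using bc_spec[OF assms(2)] di_def by simp
  obtain ra sa where ra: "ai = b*ra*ai" and sa: "ai = ai*sa*c" and ab: "ai*a*b = b" and ca: "c*a*ai = c"
    using A unfolding is_bc_inverse_def by blast
  obtain rd sd where rd: "di = b*rd*di" and sd: "di = di*sd*c" and db: "di*d*b = b" and cd: "c*d*di = c"
    using D unfolding is_bc_inverse_def by blast
  have f1: "ai*a*ai = ai" using bcL[OF A, of "ra*ai"] ra by (simp add: mult.assoc)
  have f2: "ai*a*di = di" using bcL[OF A, of "rd*di"] rd by (simp add: mult.assoc)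
  have f3: "di*d*ai = ai" using bcL[OF D, of "ra*ai"] ra by (simp add: mult.assoc)
  have f4: "di*d*(ai*a) = ai*a" using bcL[OF D, of "ra*ai*a"] ra by (metis mult.assoc)
  have f5: "ai*d*di = ai" using bcR[OF D, of "ai*sa"] sa by (metis mult.assoc)
  have f6: "di*a*ai = di" using bcR[OF A, of "di*sd"] sd by (metis mult.assoc)
  have f7: "d*di*a*ai = d*di" using bcR[OF A, of "d*di*sd"] sd by (metis mult.assoc)
  have f8: "di*d*di = di" using bcL[OF D, of "rd*di"] rd by (simp add: mult.assoc)
  have e2: "(ai * d * di * a = d * di * a * ai) \<longleftrightarrow> (ai * a = d * di)" using f5 f7 by simp
  have e3: "(di * d * ai * a = d * ai * a * di) \<longleftrightarrow> (ai * a = d * di)"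
    using f4 f2 by (simp add: mult.assoc)
  have e4: "(ai * a = d * di) \<longleftrightarrow> (ai = d * di * ai \<and> di = di * ai * a)"
  proof
    assume h: "ai * a = d * di"
    show "ai = d * di * ai \<and> di = di * ai * a"
      using h f1 f8 by (metis mult.assoc)
  next
    assume h: "ai = d * di * ai \<and> di = di * ai * a"
    have "ai*a = d*di*(ai*a)" using h by (metis mult.assoc)
    moreover have "d*di = d*di*(ai*a)" using h by (metis mult.assoc)
    ultimately show "ai * a = d * di" by simp
  qed
  have e5: "(ai * a * di = di * ai * a \<and> ai * d * di = d * di * ai) \<longleftrightarrow>
            (ai = d * di * ai \<and> di = di * ai * a)"
    using f2 f5 by auto
  have inv: "ai * a = d * di \<Longrightarrow> is_bc_inverse (a*d) b c (di*ai)"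
  proof -
    assume h: "ai * a = d * di"
    have i1: "di*ai = b*rd*(di*ai)" using rd by (metis mult.assoc)
    have i2: "di*ai = (di*ai)*sa*c" using sa by (metis mult.assoc)
    have i3: "di*ai*(a*d)*b = b"
    proof -
      have "di*ai*(a*d)*b = di*(ai*a)*d*b" by (simp add: mult.assoc)
      also have "\<dots> = di*d*di*d*b" using h by (simp add: mult.assoc)
      also have "\<dots> = b" using f8 db by simp
      finally show ?thesis .
    qed
    have i4: "c*(a*d)*(di*ai) = c"
    proof -
      have "c*(a*d)*(di*ai) = c*a*(d*di)*ai" by (simp add: mult.assoc)
      also have "\<dots> = c*a*ai*a*ai" using h by (simp add: mult.assoc)
      also have "\<dots> = c" using ca by simp
      finally show ?thesis .
    qed
    show ?thesis unfolding is_bc_inverse_def using i1 i2 i3 i4 by blast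
  qed
  have last: "ai * a = d * di \<longrightarrow> bc_invertible (a * d) b c \<and> bc_inv (a * d) b c = di * ai"
  proof
    assume h: "ai * a = d * di"
    have bi: "bc_invertible (a * d) b c" using inv[OF h] unfolding bc_invertible_def by blast
    show "bc_invertible (a * d) b c \<and> bc_inv (a * d) b c = di * ai"
      using bi bc_uniq[OF bc_spec[OF bi] inv[OF h]] by blast
  qed
  show ?thesis unfolding Let_def ai_def[symmetric] di_def[symmetric]
    using e2 e3 e4 e5 last by blast
qed

end
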